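(* Consider the Histogram Partitioning algorithm (described in the context) run on $N$ distinct keys distributed over $p$ processors. If at the start of the $j$-th round exactly $k$ splitters are unachieved, then the sampled set satisfies $|\gamma_j| \le \frac{3kN}{p}$.
   Context: Setting: $N$ distinct keys from a totally ordered set (only comparisons are used) are distributed across $p$ processors, $N/p$ keys per processor. $R(x)$ denotes the global rank of key $x$. For $\ell\in\{1,\dots,p-1\}$, the target range of splitter $\ell$ is the rank range $[\frac{N\ell}{p},\frac{N\ell}{p}+\frac{N}{p}]$; splitter $\ell$ is achieved in a round if some key whose rank lies in this range is sampled in that round (and it stays achieved afterwards). Histogram Partitioning proceeds in rounds $j=1,2,\dots$. In round $j$ there is a set $\gamma_j$ of keys from which samples are drawn ($\gamma_1$ is the whole input): each key of $\gamma_j$ is sampled independently with some probability $s_j$, the global ranks (histogram) of all sampled keys are computed and made known to all processors. For every splitter $\ell$ not yet achieved, the algorithm maintains bounds: $L_j(\ell)$ is the largest key sampled before round $j$ whose rank is below $\frac{N\ell}{p}$ (or the smallest key if none), and $U_j(\ell)$ is the smallest key sampled before round $j$ whose rank is above $\frac{N\ell}{p}+\frac{N}{p}$ (or the largest key if none). Then $\gamma_j$ is the union, over all splitters $\ell$ unachieved before round $j$, of the sets of keys lying between $L_j(\ell)$ and $U_j(\ell)$. *)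

theory Defs
  imports Complex_Main
begin

text \<open>Keys are the elements of a finite set K of a linearly ordered type (hence distinct).
  Global ranks are 0-based: the rank of x is the number of keys smaller than x.\<close>

definition rank :: "'a::linorder set \<Rightarrow> 'a \<Rightarrow> nat" where
  "rank K x = card {y \<in> K. y < x}"

definition tlo :: "'a::linorder set \<Rightarrow> nat \<Rightarrow> nat \<Rightarrow> real" where
  "tlo K p l = real (card K) * real l / real p"

definition thi :: "'a::linorder set \<Rightarrow> nat \<Rightarrow> nat \<Rightarrow> real" where
  "thi K p l = tlo K p l + real (card K) / real p"

text \<open>smp i is the set of keys sampled in round i (rounds are numbered 1, 2, ...).
  The keys sampled before round j:\<close>

definition sampled_before :: "(nat \<Rightarrow> 'a set) \<Rightarrow> nat \<Rightarrow> 'a set" where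
  "sampled_before smp j = (\<Union>i\<in>{1..<j}. smp i)"

definition achieved :: "'a::linorder set \<Rightarrow> nat \<Rightarrow> 'a set \<Rightarrow> nat \<Rightarrow> bool" where
  "achieved K p S l \<longleftrightarrow>
     (\<exists>x\<in>S. tlo K p l \<le> real (rank K x) \<and> real (rank K x) \<le> thi K p l)"

definition unachieved_at :: "'a::linorder set \<Rightarrow> nat \<Rightarrow> (nat \<Rightarrow> 'a set) \<Rightarrow> nat \<Rightarrow> nat set" where
  "unachieved_at K p smp j =
     {l \<in> {1..p-1}. \<not> achieved K p (sampled_before smp j) l}"

definition Lb :: "'a::linorder set \<Rightarrow> nat \<Rightarrow> 'a set \<Rightarrow> nat \<Rightarrow> 'a" where
  "Lb K p S l =
     (if \<exists>y\<in>S. real (rank K y) < tlo K p l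
      then Max {y \<in> S. real (rank K y) < tlo K p l} else Min K)"

definition Ub :: "'a::linorder set \<Rightarrow> nat \<Rightarrow> 'a set \<Rightarrow> nat \<Rightarrow> 'a" where
  "Ub K p S l =
     (if \<exists>y\<in>S. real (rank K y) > thi K p l
      then Min {y \<in> S. real (rank K y) > thi K p l} else Max K)"

text \<open>Keys lying between L(l) and U(l): strictly between a sampled bound (which has
  already been sampled), inclusive at a fallback bound (smallest / largest key), so that
  gamma_1 is the whole input.\<close>

definition between :: "'a::linorder set \<Rightarrow> nat \<Rightarrow> 'a set \<Rightarrow> nat \<Rightarrow> 'a \<Rightarrow> bool" where
  "between K p S l x \<longleftrightarrow>
     (if \<exists>y\<in>S. real (rank K y) < tlo K p l then Lb K p S l < x else Lb K p S l \<le> x) \<and>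
     (if \<exists>y\<in>S. real (rank K y) > thi K p l then x < Ub K p S l else x \<le> Ub K p S l)"

definition gamma :: "'a::linorder set \<Rightarrow> nat \<Rightarrow> (nat \<Rightarrow> 'a set) \<Rightarrow> nat \<Rightarrow> 'a set" where
  "gamma K p smp j =
     {x \<in> K. \<exists>l\<in>unachieved_at K p smp j. between K p (sampled_before smp j) l x}"

end

theory Submission
  imports Defs
begin

lemma rank_mono:
  assumes "finite K" "x \<in> K" "y \<in> K" "x < y"
  shows "rank K x < rank K y"
  unfolding rank_def
proof (rule psubset_card_mono)
  show "finite {z \<in> K. z < y}" using assms by simp
  show "{z \<in> K. z < x} \<subset> {z \<in> K. z < y}" using assms by auto
qed

lemma rank_le_mono:
  assumes "finite K" "x \<in> K" "y \<in> K" "x \<le> y"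
  shows "rank K x \<le> rank K y"
  using rank_mono[OF assms(1-3)] assms(4) by (metis order_le_less less_imp_le_nat)

lemma rank_inj: "finite K \<Longrightarrow> inj_on (rank K) K"
  unfolding inj_on_def
  by (metis less_irrefl linorder_neqE rank_mono)

lemma rank_lt: assumes "finite K" "x \<in> K" shows "rank K x < card K"
  unfolding rank_def
  by (rule psubset_card_mono) (use assms in auto)

lemma achieved_nat:
  assumes "card K = p * m" "p > 0"
  shows "achieved K p S l \<longleftrightarrow> (\<exists>y\<in>S. l*m \<le> rank K y \<and> rank K y \<le> l*m+m)"
proof -
  have t1: "tlo K p l = real (l*m)" using assms unfolding tlo_def by simp
  have t2: "thi K p l = real (l*m+m)" using assms unfolding thi_def tlo_def by simp
  show ?thesis unfolding achieved_def t1 t2 by (simp only: of_nat_le_iff)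
qed

lemma key:
  assumes fin: "finite K" and SK: "S \<subseteq> K" and m: "m > 0" and cK: "card K = p * m"
    and p: "p > 0"
    and l: "l \<in> {1..p-1}" and na: "\<not> achieved K p S l" and x: "x \<in> K"
    and bt: "between K p S l x"
  shows "\<exists>l'\<in>{1..p-1}. \<not> achieved K p S l' \<and> rank K x div m \<le> l'+1 \<and> l' \<le> rank K x div m + 1"
proof -
  define c where "c = rank K x div m"
  have ach: "\<And>l. achieved K p S l \<longleftrightarrow> (\<exists>y\<in>S. l*m \<le> rank K y \<and> rank K y \<le> l*m+m)"
    using achieved_nat[OF cK p] by blast
  have t1: "tlo K p l = real (l*m)" using cK p unfolding tlo_def by simp
  have t2: "thi K p l = real (l*m+m)" using cK p unfolding thi_def tlo_def by simp
  have finS: "finite S" using fin SK finite_subset by blast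
  have rx: "rank K x < p * m" using rank_lt[OF fin x] cK by simp
  have cp: "c < p" using rx m unfolding c_def
    by (simp add: less_mult_imp_div_less)
  have cm1: "c * m \<le> rank K x" unfolding c_def by (simp add: div_times_less_eq_dividend)
  have cm2: "rank K x < c * m + m" unfolding c_def using m
    by (metis add.commute div_mult_mod_eq mod_less_divisor nat_add_left_cancel_less)
  show ?thesis
  proof (cases "c \<ge> l + 2")
    case True
    show ?thesis
    proof (cases "achieved K p S (c - 1)")
      case False
      have "c - 1 \<in> {1..p-1}" using True cp by (simp add: le_diff_conv2)
      moreover have "c \<le> (c - 1) + 1" "c - 1 \<le> c + 1" by simp_all
      ultimately show ?thesis using False unfolding c_def[symmetric] by blast
    next
      case True2: True
      then obtain y where y: "y \<in> S" "(c-1)*m \<le> rank K y" "rank K y \<le> (c-1)*m+m"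
        using ach by blast
      have e1: "(c-1)*m + m = c*m" using True
        proof -
        have "c = (c - 1) + 1" using True by simp
        then have "c*m = ((c-1)+1)*m" by simp
        then show ?thesis by (simp add: algebra_simps)
      qed
      have e2: "l*m + m \<le> (c-1)*m" using True
        proof -
        have "l + 1 \<le> c - 1" using True by simp
        then have "(l+1)*m \<le> (c-1)*m" by (rule mult_le_mono1)
        then show ?thesis by (simp add: algebra_simps)
      qed
      have gt: "rank K y > l*m+m"
      proof (rule ccontr)
        assume "\<not> ?thesis"
        then have "achieved K p S l" using ach y e2 by force
        then show False using na by simp
      qed
      have ex: "\<exists>y\<in>S. real (rank K y) > thi K p l" using y gt unfolding t2 of_nat_less_iff by blast
      have "x < Ub K p S l" using bt ex unfolding between_def by simp
      also have "Ub K p S l \<le> y" proof -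
        have "y \<in> {y \<in> S. real (rank K y) > thi K p l}" using y gt unfolding t2 of_nat_less_iff by blast
        then have "Min {y \<in> S. real (rank K y) > thi K p l} \<le> y" using finS by (intro Min_le) auto
        then show ?thesis unfolding Ub_def using ex by simp
      qed
      finally have "x < y" .
      then have "rank K x < rank K y" using rank_mono[OF fin x] y SK by blast
      then show ?thesis using y e1 cm1 by linarith
    qed
  next
    case False
    show ?thesis
    proof (cases "c + 2 \<le> l")
      case True
      show ?thesis
      proof (cases "achieved K p S (c + 1)")
        case False
        have "c + 1 \<in> {1..p-1}" using True l by simp
        moreover have "c \<le> (c + 1) + 1" "c + 1 \<le> c + 1" by simp_all
        ultimately show ?thesis using False unfolding c_def[symmetric] by blast
      next
        case True2: True
        then obtain y where y: "y \<in> S" "(c+1)*m \<le> rank K y" "rank K y \<le> (c+1)*m+m"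
          using ach by blast
        have e2: "(c+1)*m + m \<le> l*m" using True
          proof -
          have "(c+2)*m \<le> l*m" using True by (rule mult_le_mono1)
          then show ?thesis by (simp add: algebra_simps)
        qed
        have lt: "rank K y < l*m"
        proof (rule ccontr)
          assume "\<not> ?thesis"
          then have "achieved K p S l" using ach y e2 by force
          then show False using na by simp
        qed
        have ex: "\<exists>y\<in>S. real (rank K y) < tlo K p l" using y lt unfolding t1 of_nat_less_iff by blast
        have "y \<le> Lb K p S l" proof -
          have "y \<in> {y \<in> S. real (rank K y) < tlo K p l}" using y lt unfolding t1 of_nat_less_iff by blast
          then have "y \<le> Max {y \<in> S. real (rank K y) < tlo K p l}" using finS by (intro Max_ge) auto
          then show ?thesis unfolding Lb_def using ex by simp
        qed
        also have "Lb K p S l < x" using bt ex unfolding between_def by simp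
        finally have "y < x" .
        then have "rank K y < rank K x" using rank_mono[OF fin _ x] y SK by blast
        then show ?thesis using y cm2 by (simp add: algebra_simps)
      qed
    next
      case False
      have "c \<le> l + 1" "l \<le> c + 1" using False \<open>\<not> c \<ge> l+2\<close> by simp_all
      then show ?thesis using l na unfolding c_def[symmetric] by blast
    qed
  qed
qed

lemma bucket_card:
  assumes fin: "finite K" and m: "m > 0"
  shows "card {x \<in> K. rank K x div m = c} \<le> m"
proof -
  have "card {x \<in> K. rank K x div m = c} \<le> card {c*m..<c*m+m}"
  proof (rule card_inj_on_le[where f="rank K"])
    show "inj_on (rank K) {x \<in> K. rank K x div m = c}"
      using rank_inj[OF fin] by (rule inj_on_subset) auto
    show "rank K ` {x \<in> K. rank K x div m = c} \<subseteq> {c * m..<c * m + m}"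
    proof
      fix r assume "r \<in> rank K ` {x \<in> K. rank K x div m = c}"
      then have "r div m = c" by auto
      then show "r \<in> {c * m..<c * m + m}" using m
        by (metis atLeastLessThan_iff add.commute div_mult_mod_eq le_add2 mod_less_divisor
            nat_add_left_cancel_less)
    qed
    show "finite {c * m..<c * m + m}" by simp
  qed
  then show ?thesis by simp
qed

theorem lemma2p2:
  fixes K :: "'a::linorder set" and N p j k :: nat and smp :: "nat \<Rightarrow> 'a set"
  assumes "finite K" and "card K = N" and "p > 0" and "p dvd N"
    and "j \<ge> 1"
    and "\<forall>i\<in>{1..<j}. smp i \<subseteq> gamma K p smp i"
    and "card (unachieved_at K p smp j) = k"
  shows "real (card (gamma K p smp j)) \<le> 3 * real k * real N / real p"
proof -
  define m where "m = N div p"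
  have Nm: "N = p * m" using assms(4) unfolding m_def by simp
  define S where "S = sampled_before smp j"
  have SK: "S \<subseteq> K" unfolding S_def sampled_before_def using assms(6)
    unfolding gamma_def by blast
  define Ua where "Ua = unachieved_at K p smp j"
  define B where "B c = {x \<in> K. rank K x div m = c}" for c
  show ?thesis
  proof (cases "m = 0")
    case True
    then have "K = {}" using Nm assms(1,2) by simp
    then show ?thesis unfolding gamma_def by simp
  next
    case False
    then have m: "m > 0" by simp
    have sub: "gamma K p smp j \<subseteq> (\<Union>l\<in>Ua. B (l-1) \<union> B l \<union> B (l+1))"
    proof
      fix x assume "x \<in> gamma K p smp j"
      then obtain l where x: "x \<in> K" and l: "l \<in> Ua" and bt: "between K p S l x"
        unfolding gamma_def Ua_def S_def by blast
      have l2: "l \<in> {1..p-1}" "\<not> achieved K p S l" using l unfolding Ua_def unachieved_at_def S_def by auto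
      obtain l' where l': "l' \<in> {1..p-1}" "\<not> achieved K p S l'"
        "rank K x div m \<le> l'+1" "l' \<le> rank K x div m + 1"
        using key[OF assms(1) SK m _ assms(3) l2 x bt] Nm assms(2) by blast
      have "l' \<in> Ua" using l' unfolding Ua_def unachieved_at_def S_def by auto
      moreover have "x \<in> B (l'-1) \<union> B l' \<union> B (l'+1)"
        using l' x unfolding B_def by auto
      ultimately show "x \<in> (\<Union>l\<in>Ua. B (l-1) \<union> B l \<union> B (l+1))" by blast
    qed
    have finU: "finite Ua" unfolding Ua_def unachieved_at_def by simp
    have "card (gamma K p smp j) \<le> card (\<Union>l\<in>Ua. B (l-1) \<union> B l \<union> B (l+1))"
      by (rule card_mono[OF _ sub]) (use finU assms(1) in \<open>auto simp: B_def\<close>)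
    also have "\<dots> \<le> (\<Sum>l\<in>Ua. card (B (l-1) \<union> B l \<union> B (l+1)))"
      by (rule card_UN_le[OF finU])
    also have "\<dots> \<le> (\<Sum>l\<in>Ua. 3 * m)"
    proof (rule sum_mono)
      fix l
      have bc: "card (B c) \<le> m" for c unfolding B_def by (rule bucket_card[OF assms(1) m])
      have "card (B (l-1) \<union> B l \<union> B (l+1)) \<le> card (B (l-1)) + card (B l) + card (B (l+1))"
        by (metis card_Un_le add_le_mono1 order_trans)
      then show "card (B (l-1) \<union> B l \<union> B (l+1)) \<le> 3 * m" using bc[of "l-1"] bc[of l] bc[of "l+1"]
        by linarith
    qed
    also have "\<dots> = 3 * m * k" using assms(7) Ua_def by simp
    finally have "real (card (gamma K p smp j)) \<le> real (3 * m * k)" by linarith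
    also have "real (3 * m * k) = 3 * real k * real N / real p" using Nm assms(3) by simp
    finally show ?thesis .
  qed
qed

end
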